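(* Let $G$ be a group with a conjugation-closed generating set $X$ and let $g\in\mathrm{Mon}(X)$. The poset $\mathrm{Fact}(G,g,\mathbf I)$ is simplicial, i.e. each of its intervals $[\mathbf x,\mathbf y]$ (with $\mathbf x\le\mathbf y$) is isomorphic to a Boolean lattice.
   Context: $\mathrm{Mon}(X)$ is the generated submonoid; $\ell(x)$ is the minimal length of a product of elements of $X$ equal to $x$. A linear factorization of $g$ is a row vector $[x_L\ x_1\ \cdots\ x_k\ x_R]$ ($k\ge0$) of elements of $\mathrm{Mon}(X)$ with $x_1,\dots,x_k\ne1$ ($x_L,x_R$ may be trivial), $\ell(x_L)+\sum_i\ell(x_i)+\ell(x_R)=\ell(g)$ and $x_Lx_1\cdots x_kx_R=g$. With $x_0=x_L$, $x_{k+1}=x_R$, the merge at position $i\in\{0,\dots,k\}$ replaces consecutive entries $x_i,x_{i+1}$ by the single entry $x_ix_{i+1}$. $\mathrm{Fact}(G,g,\mathbf I)$ is the set of linear factorizations of $g$ ordered by $\mathbf x\le\mathbf y$ iff $\mathbf x$ is obtained from $\mathbf y$ by a finite sequence of merges. A Boolean lattice is the poset of all subsets of a finite set under inclusion. *)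

theory Defs
  imports "HOL-Algebra.Generated_Groups"
begin

definition word_prod :: "('a, 'b) monoid_scheme \<Rightarrow> 'a list \<Rightarrow> 'a" where
  "word_prod G ws = foldr (\<lambda>a b. a \<otimes>\<^bsub>G\<^esub> b) ws \<one>\<^bsub>G\<^esub>"

definition Mon :: "('a, 'b) monoid_scheme \<Rightarrow> 'a set \<Rightarrow> 'a set" where
  "Mon G X = {word_prod G ws | ws. set ws \<subseteq> X}"

definition ell :: "('a, 'b) monoid_scheme \<Rightarrow> 'a set \<Rightarrow> 'a \<Rightarrow> nat" where
  "ell G X x = (LEAST n. \<exists>ws. set ws \<subseteq> X \<and> length ws = n \<and> word_prod G ws = x)"

definition conj_closed :: "('a, 'b) monoid_scheme \<Rightarrow> 'a set \<Rightarrow> bool" where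
  "conj_closed G X \<longleftrightarrow>
     (\<forall>h\<in>carrier G. \<forall>x\<in>X. h \<otimes>\<^bsub>G\<^esub> x \<otimes>\<^bsub>G\<^esub> inv\<^bsub>G\<^esub> h \<in> X)"

text \<open>Linear factorizations of g: lists [x_L, x_1, ..., x_k, x_R] (length k+2).\<close>
definition linear_factorizations :: "('a, 'b) monoid_scheme \<Rightarrow> 'a set \<Rightarrow> 'a \<Rightarrow> 'a list set" where
  "linear_factorizations G X g =
     {xs. length xs \<ge> 2 \<and> set xs \<subseteq> Mon G X
        \<and> (\<forall>i. 0 < i \<and> i < length xs - 1 \<longrightarrow> xs ! i \<noteq> \<one>\<^bsub>G\<^esub>)
        \<and> (\<Sum>y\<leftarrow>xs. ell G X y) = ell G X g
        \<and> word_prod G xs = g}"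

definition merge_at :: "('a, 'b) monoid_scheme \<Rightarrow> nat \<Rightarrow> 'a list \<Rightarrow> 'a list" where
  "merge_at G i xs = take i xs @ [xs ! i \<otimes>\<^bsub>G\<^esub> xs ! Suc i] @ drop (Suc (Suc i)) xs"

definition merge_step :: "('a, 'b) monoid_scheme \<Rightarrow> 'a list \<Rightarrow> 'a list \<Rightarrow> bool" where
  "merge_step G ys xs \<longleftrightarrow> (\<exists>i. Suc i < length ys \<and> xs = merge_at G i ys)"

definition fact_le :: "('a, 'b) monoid_scheme \<Rightarrow> 'a set \<Rightarrow> 'a \<Rightarrow> 'a list \<Rightarrow> 'a list \<Rightarrow> bool" where
  "fact_le G X g xs ys \<longleftrightarrow>
     xs \<in> linear_factorizations G X g \<and> ys \<in> linear_factorizations G X g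
     \<and> (merge_step G)\<^sup>*\<^sup>* ys xs"

definition iso_boolean_lattice :: "'c set \<Rightarrow> ('c \<Rightarrow> 'c \<Rightarrow> bool) \<Rightarrow> bool" where
  "iso_boolean_lattice P r \<longleftrightarrow>
     (\<exists>(S :: nat set) f. finite S \<and> bij_betw f P (Pow S)
        \<and> (\<forall>z\<in>P. \<forall>w\<in>P. r z w \<longleftrightarrow> f z \<subseteq> f w))"

end

theory Submission
  imports Defs "HOL-Library.Sublist"
begin

lemma subseq_filter_eq:
  assumes "subseq a Y" "distinct Y"
  shows "a = filter (\<lambda>x. x \<in> set a) Y"
  using assms
proof (induction rule: list_emb.induct)
  case (list_emb_Nil ys)
  then show ?case by simp
next
  case (list_emb_Cons xs ys y)
  then have e: "xs = filter (\<lambda>x. x \<in> set xs) ys" by simp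
  have "set xs \<subseteq> set ys" using arg_cong[of _ _ set, OF e] by auto
  with list_emb_Cons show ?case by auto
next
  case (list_emb_Cons2 x y xs ys)
  then have e: "xs = filter (\<lambda>x. x \<in> set xs) ys" by simp
  have "set xs \<subseteq> set ys" using arg_cong[of _ _ set, OF e] by auto
  have "filter (\<lambda>z. z = y \<or> z \<in> set xs) ys = filter (\<lambda>z. z \<in> set xs) ys"
    using list_emb_Cons2 by (intro filter_cong) auto
  with list_emb_Cons2 show ?case by auto
qed

lemma subseq_unique:
  assumes "subseq a Y" "subseq b Y" "distinct Y" "set a = set b"
  shows "a = b"
  using subseq_filter_eq[OF assms(1,3)] subseq_filter_eq[OF assms(2,3)] assms(4) by simp

lemma subseq_distinct: "subseq a Y \<Longrightarrow> distinct Y \<Longrightarrow> distinct a"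
proof -
  assume a: "subseq a Y" "distinct Y"
  have "distinct (filter (\<lambda>x. x \<in> set a) Y)" using a(2) by simp
  then show ?thesis by (simp only: subseq_filter_eq[OF a, symmetric])
qed

lemma subseq_set: "subseq a Y \<Longrightarrow> set a \<subseteq> set Y"
  by (auto elim: list_emb_set)

fun pps :: "('a, 'b) monoid_scheme \<Rightarrow> 'a list \<Rightarrow> 'a list" where
  "pps G [] = []"
| "pps G [a] = []"
| "pps G (a # b # r) = a # map (\<lambda>p. a \<otimes>\<^bsub>G\<^esub> p) (pps G (b # r))"

lemma length_pps: "length (pps G w) = length w - 1"
  by (induction G w rule: pps.induct) auto

lemma merge_at_0: "merge_at G 0 (a # b # r) = (a \<otimes>\<^bsub>G\<^esub> b) # r"
  by (simp add: merge_at_def)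

lemma merge_at_Suc: "merge_at G (Suc i) (a # r) = a # merge_at G i r"
  by (simp add: merge_at_def)

lemma length_merge_at: "Suc i < length w \<Longrightarrow> length (merge_at G i w) = length w - 1"
  by (simp add: merge_at_def)

lemma merge_at_split: "Suc i < length w \<Longrightarrow>
   w = take i w @ [w ! i, w ! Suc i] @ drop (Suc (Suc i)) w"
proof -
  assume a: "Suc i < length w"
  have 1: "drop i w = w ! i # drop (Suc i) w" using a by (simp add: Cons_nth_drop_Suc)
  have 2: "drop (Suc i) w = w ! Suc i # drop (Suc (Suc i)) w" using a by (simp add: Cons_nth_drop_Suc)
  have "drop i w = [w ! i, w ! Suc i] @ drop (Suc (Suc i)) w" using 1 2 by simp
  then show ?thesis using append_take_drop_id[of i w] by simp
qed

lemma len2_cases: "Suc 0 < length w \<Longrightarrow> \<exists>a b r. w = a # b # r"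
  by (cases w; cases "tl w") auto

lemma len1_cases: "length w = Suc 0 \<Longrightarrow> \<exists>a. w = [a]"
  by (cases w) auto

context group
begin

lemma wp_Nil[simp]: "word_prod G [] = \<one>" by (simp add: word_prod_def)
lemma wp_Cons[simp]: "word_prod G (a # w) = a \<otimes> word_prod G w" by (simp add: word_prod_def)

lemma wp_carrier: "set w \<subseteq> carrier G \<Longrightarrow> word_prod G w \<in> carrier G"
  by (induction w) auto

lemma wp_append: "set u \<subseteq> carrier G \<Longrightarrow> set v \<subseteq> carrier G \<Longrightarrow>
   word_prod G (u @ v) = word_prod G u \<otimes> word_prod G v"
  by (induction u) (auto simp: m_assoc wp_carrier)

lemma pps_carrier: "set w \<subseteq> carrier G \<Longrightarrow> set (pps G w) \<subseteq> carrier G"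
  by (induction w rule: induct_list012) auto

lemma pps_nth: "k < length w - 1 \<Longrightarrow> set w \<subseteq> carrier G \<Longrightarrow> pps G w ! k = word_prod G (take (Suc k) w)"
proof (induction w arbitrary: k rule: induct_list012)
  case (3 a b r)
  show ?case
  proof (cases k)
    case 0 then show ?thesis using 3 by simp
  next
    case (Suc k')
    then show ?thesis using 3 by (simp add: length_pps)
  qed
qed auto

lemma merge_carrier: "Suc i < length w \<Longrightarrow> set w \<subseteq> carrier G \<Longrightarrow> set (merge_at G i w) \<subseteq> carrier G"
proof -
  assume a: "Suc i < length w" "set w \<subseteq> carrier G"
  then have "w ! i \<in> carrier G" "w ! Suc i \<in> carrier G" using nth_mem[of i w] nth_mem[of "Suc i" w] by auto
  then show ?thesis using a unfolding merge_at_def by (auto dest!: in_set_takeD in_set_dropD)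
qed

lemma wp_merge: "Suc i < length w \<Longrightarrow> set w \<subseteq> carrier G \<Longrightarrow> word_prod G (merge_at G i w) = word_prod G w"
proof (induction i arbitrary: w)
  case 0
  then obtain a b r where w: "w = a # b # r" using len2_cases by blast
  then show ?case using 0 by (simp add: merge_at_0 m_assoc wp_carrier)
next
  case (Suc i)
  then obtain a r where w: "w = a # r" by (cases w) auto
  then show ?case using Suc by (simp add: merge_at_Suc)
qed

lemma pps_merge: "Suc i < length w \<Longrightarrow> set w \<subseteq> carrier G \<Longrightarrow>
   pps G (merge_at G i w) = take i (pps G w) @ drop (Suc i) (pps G w)"
proof (induction i arbitrary: w)
  case 0
  then obtain a b r where w: "w = a # b # r" using len2_cases by blast
  show ?case
  proof (cases r)
    case Nil then show ?thesis using w by (simp add: merge_at_0)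
  next
    case (Cons c r')
    have "set (pps G (c # r')) \<subseteq> carrier G" using 0 w Cons by (intro pps_carrier) auto
    then show ?thesis using w Cons 0 by (auto simp add: merge_at_0 m_assoc)
  qed
next
  case (Suc i)
  then obtain a r where w: "w = a # r" by (cases w) auto
  then obtain b r' where r: "r = b # r'" using Suc by (cases r) auto
  have lm: "length (merge_at G i r) = length r - 1" using Suc w by (intro length_merge_at) auto
  then obtain c s where m: "merge_at G i r = c # s" using Suc w
    by (cases "merge_at G i r") auto
  have IH: "pps G (merge_at G i r) = take i (pps G r) @ drop (Suc i) (pps G r)"
    using Suc w by auto
  have "pps G (merge_at G (Suc i) w) = a # map ((\<otimes>) a) (pps G (merge_at G i r))"
    using w m by (simp add: merge_at_Suc)
  also have "\<dots> = take (Suc i) (pps G w) @ drop (Suc (Suc i)) (pps G w)"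
    unfolding IH using w r by (simp add: take_map drop_map)
  finally show ?case .
qed

lemma pps_inj: "set w \<subseteq> carrier G \<Longrightarrow> set w' \<subseteq> carrier G \<Longrightarrow> w \<noteq> [] \<Longrightarrow> w' \<noteq> [] \<Longrightarrow>
  pps G w = pps G w' \<Longrightarrow> word_prod G w = word_prod G w' \<Longrightarrow> w = w'"
proof (induction w arbitrary: w' rule: induct_list012)
  case (2 a)
  have "length w' - 1 = 0" using 2(5) length_pps[of G w'] by simp
  then have "length w' = Suc 0" using 2(4) by (cases w') auto
  then obtain a' where "w' = [a']" using len1_cases by blast
  then show ?case using 2 by simp
next
  case (3 a b r)
  have "length w' - 1 = Suc (length r)" using 3(7) length_pps[of G w'] length_pps[of G "a # b # r"] by simp
  then have "Suc 0 < length w'" by simp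
  then obtain a' b' r' where w': "w' = a' # b' # r'" using len2_cases by blast
  then have aa: "a = a'" using 3 by simp
  have meq: "map ((\<otimes>) a) (pps G (b # r)) = map ((\<otimes>) a) (pps G (b' # r'))"
    using 3 w' aa by simp
  have ia: "inj_on ((\<otimes>) a) (carrier G)" using 3 by (auto intro: inj_onI)
  have s1: "set (pps G (b # r)) \<subseteq> carrier G" using 3 by (intro pps_carrier) simp
  have s2: "set (pps G (b' # r')) \<subseteq> carrier G" using 3 w' by (intro pps_carrier) simp
  have ia2: "inj_on ((\<otimes>) a) (set (pps G (b # r)) \<union> set (pps G (b' # r')))"
    using inj_on_subset[OF ia] s1 s2 by blast
  have pe: "pps G (b # r) = pps G (b' # r')" using map_inj_on[OF meq ia2] .
  have we: "word_prod G (b # r) = word_prod G (b' # r')"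
    using 3 w' aa by (auto simp: wp_carrier)
  have c1: "set (b # r) \<subseteq> carrier G" using 3(3) by simp
  have c2: "set (b' # r') \<subseteq> carrier G" using 3(4) w' by simp
  have "b # r = b' # r'" using 3(2)[OF c1 c2 _ _ pe we] by simp
  then show ?case using aa w' by simp
qed auto

lemma Mon_carrier: "X \<subseteq> carrier G \<Longrightarrow> Mon G X \<subseteq> carrier G"
  unfolding Mon_def using wp_carrier by blast

lemma one_Mon: "\<one> \<in> Mon G X"
  unfolding Mon_def by (rule CollectI, rule exI[of _ "[]"]) simp

lemma Mon_mult: "a \<in> Mon G X \<Longrightarrow> b \<in> Mon G X \<Longrightarrow> X \<subseteq> carrier G \<Longrightarrow> a \<otimes> b \<in> Mon G X"
proof -
  assume a: "a \<in> Mon G X" "b \<in> Mon G X" "X \<subseteq> carrier G"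
  then obtain u v where "set u \<subseteq> X" "a = word_prod G u" "set v \<subseteq> X" "b = word_prod G v"
    unfolding Mon_def by blast
  then show ?thesis unfolding Mon_def using a(3)
    by (intro CollectI exI[of _ "u @ v"]) (auto simp: wp_append)
qed

lemma wp_Mon: "set w \<subseteq> Mon G X \<Longrightarrow> X \<subseteq> carrier G \<Longrightarrow> word_prod G w \<in> Mon G X"
  by (induction w) (auto simp: one_Mon Mon_mult)

lemma ell_ex: "a \<in> Mon G X \<Longrightarrow> \<exists>ws. set ws \<subseteq> X \<and> length ws = ell G X a \<and> word_prod G ws = a"
proof -
  assume "a \<in> Mon G X"
  then obtain ws where "set ws \<subseteq> X" "word_prod G ws = a" unfolding Mon_def by blast
  then have "\<exists>n. \<exists>ws. set ws \<subseteq> X \<and> length ws = n \<and> word_prod G ws = a" by blast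
  then show ?thesis unfolding ell_def by (rule LeastI_ex)
qed

lemma ell_le: "set ws \<subseteq> X \<Longrightarrow> ell G X (word_prod G ws) \<le> length ws"
  unfolding ell_def by (rule Least_le) blast

lemma ell_one: "ell G X \<one> = 0"
  using ell_le[of "[]"] by simp

lemma ell_zero: "a \<in> Mon G X \<Longrightarrow> ell G X a = 0 \<Longrightarrow> a = \<one>"
  using ell_ex[of a X] by auto

lemma ell_mult: "a \<in> Mon G X \<Longrightarrow> b \<in> Mon G X \<Longrightarrow> X \<subseteq> carrier G \<Longrightarrow>
   ell G X (a \<otimes> b) \<le> ell G X a + ell G X b"
proof -
  assume a: "a \<in> Mon G X" "b \<in> Mon G X" "X \<subseteq> carrier G"
  obtain u where u: "set u \<subseteq> X" "length u = ell G X a" "word_prod G u = a" using ell_ex[OF a(1)] by blast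
  obtain v where v: "set v \<subseteq> X" "length v = ell G X b" "word_prod G v = b" using ell_ex[OF a(2)] by blast
  have "a \<otimes> b = word_prod G (u @ v)" using u v a(3) by (simp add: wp_append)
  then show ?thesis using ell_le[of "u @ v"] u v by simp
qed

lemma ell_wp: "set w \<subseteq> Mon G X \<Longrightarrow> X \<subseteq> carrier G \<Longrightarrow>
   ell G X (word_prod G w) \<le> sum_list (map (ell G X) w)"
proof (induction w)
  case Nil then show ?case by (simp add: ell_one)
next
  case (Cons a w)
  then have "ell G X (word_prod G (a # w)) \<le> ell G X a + ell G X (word_prod G w)"
    by (simp add: ell_mult wp_Mon)
  then show ?case using Cons by simp
qed

lemma ell_block:
  assumes "set (A @ B @ C) \<subseteq> Mon G X" "X \<subseteq> carrier G"
    "sum_list (map (ell G X) (A @ B @ C)) = ell G X (word_prod G (A @ B @ C))"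
  shows "ell G X (word_prod G B) = sum_list (map (ell G X) B)"
proof -
  have M: "set A \<subseteq> Mon G X" "set B \<subseteq> Mon G X" "set C \<subseteq> Mon G X" using assms(1) by auto
  have C: "set A \<subseteq> carrier G" "set B \<subseteq> carrier G" "set C \<subseteq> carrier G"
    using M Mon_carrier[OF assms(2)] by auto
  have W: "word_prod G A \<in> Mon G X" "word_prod G B \<in> Mon G X" "word_prod G C \<in> Mon G X"
    using M assms(2) by (auto intro: wp_Mon)
  have "word_prod G (A @ B @ C) = word_prod G A \<otimes> (word_prod G B \<otimes> word_prod G C)"
    using C by (simp add: wp_append)
  then have "ell G X (word_prod G (A @ B @ C)) \<le> ell G X (word_prod G A) + (ell G X (word_prod G B) + ell G X (word_prod G C))"
  proof -
    have e1: "ell G X (word_prod G B \<otimes> word_prod G C) \<le> ell G X (word_prod G B) + ell G X (word_prod G C)"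
      using ell_mult[OF W(2,3) assms(2)] .
    have e2: "ell G X (word_prod G A \<otimes> (word_prod G B \<otimes> word_prod G C)) \<le> ell G X (word_prod G A) + ell G X (word_prod G B \<otimes> word_prod G C)"
      using ell_mult[OF W(1) Mon_mult[OF W(2,3) assms(2)] assms(2)] .
    show ?thesis using e1 e2 \<open>word_prod G (A @ B @ C) = _\<close> by simp
  qed
  moreover have "ell G X (word_prod G A) \<le> sum_list (map (ell G X) A)"
    "ell G X (word_prod G B) \<le> sum_list (map (ell G X) B)"
    "ell G X (word_prod G C) \<le> sum_list (map (ell G X) C)"
    using M assms(2) by (auto intro: ell_wp)
  ultimately show ?thesis using assms(3) by simp
qed

lemma good_distinct:
  "X \<subseteq> carrier G \<Longrightarrow> set w \<subseteq> Mon G X \<Longrightarrow> sum_list (map (ell G X) w) = ell G X (word_prod G w) \<Longrightarrow>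
   (\<forall>j. 0 < j \<and> j < length w - 1 \<longrightarrow> w ! j \<noteq> \<one>) \<Longrightarrow> distinct (pps G w)"
proof (induction w rule: induct_list012)
  case (3 a b r)
  define u where "u = b # r"
  have XC: "X \<subseteq> carrier G" using 3 by simp
  have uM: "set u \<subseteq> Mon G X" using 3 u_def by simp
  have uC: "set u \<subseteq> carrier G" using uM Mon_carrier[OF XC] by auto
  have aC: "a \<in> carrier G" using 3 Mon_carrier[OF XC] by auto
  have us: "sum_list (map (ell G X) u) = ell G X (word_prod G u)"
    using ell_block[of "[a]" u "[]"] 3 u_def by simp
  have ui: "\<forall>j. 0 < j \<and> j < length u - 1 \<longrightarrow> u ! j \<noteq> \<one>"
  proof (intro allI impI)
    fix j assume "0 < j \<and> j < length u - 1"
    then have "0 < Suc j \<and> Suc j < length (a # b # r) - 1" using u_def by auto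
    then have "(a # b # r) ! Suc j \<noteq> \<one>" using 3(6) by blast
    then show "u ! j \<noteq> \<one>" using u_def by simp
  qed
  have du: "distinct (pps G u)" using 3(2)[OF XC] uM us ui u_def by simp
  have n1: "\<one> \<notin> set (pps G u)"
  proof
    assume "\<one> \<in> set (pps G u)"
    then obtain k where k: "k < length (pps G u)" "pps G u ! k = \<one>" by (metis in_set_conv_nth)
    then have k2: "k < length u - 1" by (simp add: length_pps)
    then have rne: "r \<noteq> []" using u_def by auto
    have "0 < (1::nat) \<and> 1 < length (a # b # r) - 1" using rne by simp
    then have "(a # b # r) ! 1 \<noteq> \<one>" using 3(6) by blast
    then have b1: "b \<noteq> \<one>" by simp
    have bM: "b \<in> Mon G X" using uM u_def by simp
    have e: "ell G X (word_prod G (take (Suc k) u)) = sum_list (map (ell G X) (take (Suc k) u))"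
      using ell_block[of "[]" "take (Suc k) u" "drop (Suc k) u"] uM us XC by simp
    have "ell G X b \<noteq> 0" using ell_zero[OF bM] b1 by auto
    then have "sum_list (map (ell G X) (take (Suc k) u)) \<noteq> 0" using u_def by simp
    moreover have "word_prod G (take (Suc k) u) = \<one>" using k pps_nth[OF k2 uC] by simp
    ultimately show False using e ell_one by simp
  qed
  have "set (pps G u) \<subseteq> carrier G" using pps_carrier[OF uC] .
  then have "inj_on ((\<otimes>) a) (set (pps G u))"
  proof (intro inj_onI)
    fix x y assume xy: "x \<in> set (pps G u)" "y \<in> set (pps G u)" "a \<otimes> x = a \<otimes> y"
      and sc: "set (pps G u) \<subseteq> carrier G"
    then have "x \<in> carrier G" "y \<in> carrier G" by auto
    then show "x = y" using xy(3) aC by simp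
  qed
  moreover have "a \<notin> (\<otimes>) a ` set (pps G u)"
    using n1 aC \<open>set (pps G u) \<subseteq> carrier G\<close> by (auto simp: r_cancel_one')
  ultimately show ?case using du u_def by (simp add: distinct_map)
qed auto

lemma interior_nontriv: "distinct (pps G w) \<Longrightarrow> set w \<subseteq> carrier G \<Longrightarrow> 0 < j \<Longrightarrow> j < length w - 1 \<Longrightarrow> w ! j \<noteq> \<one>"
proof (induction w arbitrary: j rule: induct_list012)
  case (3 a b r)
  have C: "set (pps G (b # r)) \<subseteq> carrier G" using 3 by (intro pps_carrier) auto
  have d: "distinct (pps G (b # r))" using 3(3) by (simp add: distinct_map)
  have aC: "a \<in> carrier G" using 3(4) by simp
  have "a \<notin> (\<otimes>) a ` set (pps G (b # r))" using 3(3) by simp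
  then have n1: "\<one> \<notin> set (pps G (b # r))" using aC by (metis image_eqI r_one)
  show ?case
  proof (cases "j = 1")
    case True
    then have "r \<noteq> []" using 3 by auto
    then obtain c r' where "r = c # r'" by (cases r) auto
    then show ?thesis using n1 True by auto
  next
    case False
    then obtain j' where j: "j = Suc j'" "0 < j'" using 3 by (cases j) auto
    have c: "set (b # r) \<subseteq> carrier G" using 3(4) by simp
    have "j' < length (b # r) - 1" using 3(6) j by simp
    then have "(b # r) ! j' \<noteq> \<one>" using 3(2)[OF d c j(2)] by simp
    then show ?thesis using j by simp
  qed
qed auto

lemma take_drop_subseq: "subseq (take i l @ drop (Suc i) l) l"
proof -
  have "subseq (drop (Suc i) l) (drop i l)"
  proof -
    have "suffix (drop 1 (drop i l)) (drop i l)" by (rule suffix_drop)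
    then have "suffix (drop (Suc i) l) (drop i l)" by simp
    then show ?thesis by (rule suffix_imp_subseq)
  qed
  then have "subseq (take i l @ drop (Suc i) l) (take i l @ drop i l)"
    by (simp only: subseq_append')
  then show ?thesis by simp
qed

lemma merge_step_inv: "merge_step G w w' \<Longrightarrow> set w \<subseteq> carrier G \<Longrightarrow>
  set w' \<subseteq> carrier G \<and> subseq (pps G w') (pps G w) \<and> word_prod G w' = word_prod G w
  \<and> length w' < length w \<and> (w \<noteq> [] \<longrightarrow> w' \<noteq> [])"
proof -
  assume a: "merge_step G w w'" "set w \<subseteq> carrier G"
  then obtain i where i: "Suc i < length w" "w' = merge_at G i w" unfolding merge_step_def by blast
  have l: "length (merge_at G i w) = length w - 1" using length_merge_at[OF i(1)] .
  have l2: "length w' < length w" "w' \<noteq> []" using l i by auto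
  have s1: "set w' \<subseteq> carrier G" using merge_carrier[OF i(1) a(2)] i(2) by simp
  have s2: "subseq (pps G w') (pps G w)"
    unfolding i(2) pps_merge[OF i(1) a(2)] by (rule take_drop_subseq)
  have s3: "word_prod G w' = word_prod G w" using wp_merge[OF i(1) a(2)] i(2) by simp
  show ?thesis using s1 s2 s3 l2 by blast
qed

lemma merges_inv: "(merge_step G)\<^sup>*\<^sup>* w w' \<Longrightarrow> set w \<subseteq> carrier G \<Longrightarrow>
  set w' \<subseteq> carrier G \<and> subseq (pps G w') (pps G w) \<and> word_prod G w' = word_prod G w
  \<and> length w' \<le> length w \<and> (w \<noteq> [] \<longrightarrow> w' \<noteq> [])"
proof (induction rule: rtranclp_induct)
  case base then show ?case by simp
next
  case (step y z)
  have y: "set y \<subseteq> carrier G" "subseq (pps G y) (pps G w)" "word_prod G y = word_prod G w"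
    "length y \<le> length w" "w \<noteq> [] \<longrightarrow> y \<noteq> []" using step.IH step.prems by auto
  have z: "set z \<subseteq> carrier G" "subseq (pps G z) (pps G y)" "word_prod G z = word_prod G y"
    "length z < length y" "y \<noteq> [] \<longrightarrow> z \<noteq> []" using merge_step_inv[OF step.hyps(2) y(1)] by auto
  have "subseq (pps G z) (pps G w)" using subseq_order.order_trans[OF z(2) y(2)] .
  then show ?case using y z by auto
qed

lemma merge_step_Mon: "merge_step G w w' \<Longrightarrow> set w \<subseteq> Mon G X \<Longrightarrow> X \<subseteq> carrier G \<Longrightarrow>
  set w' \<subseteq> Mon G X \<and> sum_list (map (ell G X) w') \<le> sum_list (map (ell G X) w)"
proof -
  assume a: "merge_step G w w'" "set w \<subseteq> Mon G X" "X \<subseteq> carrier G"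
  then obtain i where i: "Suc i < length w" "w' = merge_at G i w" unfolding merge_step_def by blast
  define A where "A = take i w"
  define C where "C = drop (Suc (Suc i)) w"
  define p where "p = w ! i"
  define q where "q = w ! Suc i"
  have w: "w = A @ [p, q] @ C" using merge_at_split[OF i(1)] A_def C_def p_def q_def by simp
  have w': "w' = A @ [p \<otimes> q] @ C" using i(2) A_def C_def p_def q_def merge_at_def by simp
  have pq: "p \<in> Mon G X" "q \<in> Mon G X" using a(2) w by auto
  have "ell G X (p \<otimes> q) \<le> ell G X p + ell G X q" using ell_mult[OF pq a(3)] .
  then show ?thesis using a(2) w w' Mon_mult[OF pq a(3)] by auto
qed

lemma merges_Mon: "(merge_step G)\<^sup>*\<^sup>* w w' \<Longrightarrow> set w \<subseteq> Mon G X \<Longrightarrow> X \<subseteq> carrier G \<Longrightarrow>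
  set w' \<subseteq> Mon G X \<and> sum_list (map (ell G X) w') \<le> sum_list (map (ell G X) w)"
proof (induction rule: rtranclp_induct)
  case base then show ?case by simp
next
  case (step y z)
  then show ?case using merge_step_Mon[of y z] by fastforce
qed

lemma remove_cuts:
  assumes "finite T"
  shows "set w \<subseteq> carrier G \<Longrightarrow> distinct (pps G w) \<Longrightarrow> T \<subseteq> set (pps G w) \<Longrightarrow>
    \<exists>w'. (merge_step G)\<^sup>*\<^sup>* w w' \<and> set (pps G w') = set (pps G w) - T"
  using assms
proof (induction T rule: finite_induct)
  case empty then show ?case by auto
next
  case (insert t T0)
  then obtain w0 where w0: "(merge_step G)\<^sup>*\<^sup>* w w0" "set (pps G w0) = set (pps G w) - T0" by auto
  have inv: "set w0 \<subseteq> carrier G" "subseq (pps G w0) (pps G w)" using merges_inv[OF w0(1) insert(4)] by auto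
  have d: "distinct (pps G w0)" using subseq_distinct[OF inv(2) insert(5)] .
  have t: "t \<in> set (pps G w0)" using w0(2) insert by auto
  then obtain i where i: "i < length (pps G w0)" "pps G w0 ! i = t" by (metis in_set_conv_nth)
  then have si: "Suc i < length w0" by (simp add: length_pps)
  define w1 where "w1 = merge_at G i w0"
  have "merge_step G w0 w1" unfolding merge_step_def w1_def using si by blast
  then have r: "(merge_step G)\<^sup>*\<^sup>* w w1" using w0(1) by simp
  have p1: "pps G w1 = take i (pps G w0) @ drop (Suc i) (pps G w0)"
    unfolding w1_def using pps_merge[OF si inv(1)] .
  have e: "pps G w0 = take i (pps G w0) @ t # drop (Suc i) (pps G w0)"
    using id_take_nth_drop[OF i(1)] i(2) by simp
  define L where "L = take i (pps G w0)"
  define R where "R = drop (Suc i) (pps G w0)"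
  have e2: "pps G w0 = L @ t # R" using e L_def R_def by simp
  have dd: "distinct (L @ t # R)" using d e2 by simp
  have "set (pps G w1) = set (L @ R)" using p1 L_def R_def by simp
  also have "\<dots> = set (L @ t # R) - {t}" using dd by auto
  finally have "set (pps G w1) = set (pps G w0) - {t}" using e2 by simp
  then show ?case using r w0(2) by auto
qed

lemma reach_unique:
  assumes "(merge_step G)\<^sup>*\<^sup>* y w" "(merge_step G)\<^sup>*\<^sup>* y w'" "set y \<subseteq> carrier G" "y \<noteq> []"
    "distinct (pps G y)" "set (pps G w) = set (pps G w')"
  shows "w = w'"
proof -
  have a: "set w \<subseteq> carrier G" "subseq (pps G w) (pps G y)" "word_prod G w = word_prod G y" "w \<noteq> []"
    using merges_inv[OF assms(1,3)] assms(4) by auto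
  have b: "set w' \<subseteq> carrier G" "subseq (pps G w') (pps G y)" "word_prod G w' = word_prod G y" "w' \<noteq> []"
    using merges_inv[OF assms(2,3)] assms(4) by auto
  have "pps G w = pps G w'" using subseq_unique[OF a(2) b(2) assms(5,6)] .
  then show ?thesis using pps_inj[OF a(1) b(1) a(4) b(4)] a(3) b(3) by simp
qed

lemma LF_props: "xs \<in> linear_factorizations G X g \<Longrightarrow> X \<subseteq> carrier G \<Longrightarrow>
   set xs \<subseteq> carrier G \<and> xs \<noteq> [] \<and> distinct (pps G xs)"
proof -
  assume a: "xs \<in> linear_factorizations G X g" "X \<subseteq> carrier G"
  then have b: "length xs \<ge> 2" "set xs \<subseteq> Mon G X" "\<forall>i. 0 < i \<and> i < length xs - 1 \<longrightarrow> xs ! i \<noteq> \<one>"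
    "sum_list (map (ell G X) xs) = ell G X g" "word_prod G xs = g"
    unfolding linear_factorizations_def by auto
  have "distinct (pps G xs)" using good_distinct[OF a(2) b(2)] b(3,4,5) by simp
  moreover have "set xs \<subseteq> carrier G" using b(2) Mon_carrier[OF a(2)] by auto
  moreover have "xs \<noteq> []" using b(1) by auto
  ultimately show ?thesis by simp
qed

lemma between_valid:
  assumes "(merge_step G)\<^sup>*\<^sup>* ys w" "(merge_step G)\<^sup>*\<^sup>* w xs"
    "ys \<in> linear_factorizations G X g" "xs \<in> linear_factorizations G X g" "X \<subseteq> carrier G"
  shows "w \<in> linear_factorizations G X g"
proof -
  have Y: "set ys \<subseteq> carrier G" "ys \<noteq> []" "distinct (pps G ys)" using LF_props[OF assms(3,5)] by auto
  have i1: "set w \<subseteq> carrier G" "subseq (pps G w) (pps G ys)" "word_prod G w = word_prod G ys"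
    using merges_inv[OF assms(1) Y(1)] by auto
  have i2: "length xs \<le> length w" using merges_inv[OF assms(2) i1(1)] by auto
  have ysM: "set ys \<subseteq> Mon G X" "sum_list (map (ell G X) ys) = ell G X g" "word_prod G ys = g" "length xs \<ge> 2"
    using assms(3,4) unfolding linear_factorizations_def by auto
  have m: "set w \<subseteq> Mon G X" "sum_list (map (ell G X) w) \<le> sum_list (map (ell G X) ys)"
    using merges_Mon[OF assms(1) ysM(1) assms(5)] by auto
  have "ell G X (word_prod G w) \<le> sum_list (map (ell G X) w)" using ell_wp[OF m(1) assms(5)] .
  then have s: "sum_list (map (ell G X) w) = ell G X g" using m(2) ysM i1(3) by simp
  have d: "distinct (pps G w)" using subseq_distinct[OF i1(2) Y(3)] .
  have nt: "\<forall>i. 0 < i \<and> i < length w - 1 \<longrightarrow> w ! i \<noteq> \<one>" using interior_nontriv[OF d i1(1)] by auto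
  have l2: "2 \<le> length w" using i2 ysM(4) by simp
  have pw: "word_prod G w = g" using i1(3) ysM(3) by simp
  show ?thesis unfolding linear_factorizations_def
    by (intro CollectI conjI l2 m(1) nt s pw)
qed

end

theorem proposition3p12:
  fixes G (structure) and X :: "'a set" and g :: 'a
  assumes "group G"
    and "X \<subseteq> carrier G"
    and "generate G X = carrier G"
    and "conj_closed G X"
    and "g \<in> Mon G X"
  shows "\<forall>xs ys. fact_le G X g xs ys \<longrightarrow>
           iso_boolean_lattice {zs. fact_le G X g xs zs \<and> fact_le G X g zs ys} (fact_le G X g)"
proof (intro allI impI)
  fix xs ys assume fl: "fact_le G X g xs ys"
  interpret group G by (rule assms(1))
  have XC: "X \<subseteq> carrier G" by (rule assms(2))
  from fl have xsL: "xs \<in> linear_factorizations G X g" and ysL: "ys \<in> linear_factorizations G X g"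
    and r: "(merge_step G)\<^sup>*\<^sup>* ys xs" unfolding fact_le_def by auto
  have Y: "set ys \<subseteq> carrier G" "ys \<noteq> []" "distinct (pps G ys)" using LF_props[OF ysL XC] by auto
  define Yl where "Yl = pps G ys"
  define Px where "Px = set (pps G xs)"
  define I where "I = {zs. fact_le G X g xs zs \<and> fact_le G X g zs ys}"
  define S where "S = {c. c < length Yl \<and> Yl ! c \<notin> Px}"
  define f where "f = (\<lambda>z. {c. c < length Yl \<and> Yl ! c \<in> set (pps G z) \<and> Yl ! c \<notin> Px})"
  have memI: "\<And>z. z \<in> I \<Longrightarrow> z \<in> linear_factorizations G X g \<and> (merge_step G)\<^sup>*\<^sup>* ys z \<and> (merge_step G)\<^sup>*\<^sup>* z xs"
    unfolding I_def fact_le_def by auto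
  have zsub: "Px \<subseteq> set (pps G z) \<and> set (pps G z) \<subseteq> set Yl" if zI: "z \<in> I" for z
  proof -
    have z: "z \<in> linear_factorizations G X g" "(merge_step G)\<^sup>*\<^sup>* ys z" "(merge_step G)\<^sup>*\<^sup>* z xs"
      using memI[OF zI] by auto
    have zc: "set z \<subseteq> carrier G" using LF_props[OF z(1) XC] by simp
    have "subseq (pps G z) Yl" using merges_inv[OF z(2) Y(1)] Yl_def by simp
    then have s1: "set (pps G z) \<subseteq> set Yl" by (rule subseq_set)
    have "subseq (pps G xs) (pps G z)" using merges_inv[OF z(3) zc] by simp
    then have s2: "set (pps G xs) \<subseteq> set (pps G z)" by (rule subseq_set)
    show ?thesis using s1 s2 Px_def by simp
  qed
  have key: "f z \<subseteq> f z' \<longleftrightarrow> set (pps G z) \<subseteq> set (pps G z')" if zI: "z \<in> I" "z' \<in> I" for z z'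
  proof
    assume fs: "f z \<subseteq> f z'"
    show "set (pps G z) \<subseteq> set (pps G z')"
    proof
      fix p assume p: "p \<in> set (pps G z)"
      then have "p \<in> set Yl" using zsub[OF zI(1)] by blast
      then obtain c where c: "c < length Yl" "Yl ! c = p" by (metis in_set_conv_nth)
      show "p \<in> set (pps G z')"
      proof (cases "p \<in> Px")
        case True then show ?thesis using zsub[OF zI(2)] by blast
      next
        case False
        then have "c \<in> f z" using c p f_def by simp
        then have "c \<in> f z'" using fs by blast
        then show ?thesis using c f_def by simp
      qed
    qed
  next
    assume "set (pps G z) \<subseteq> set (pps G z')"
    then show "f z \<subseteq> f z'" unfolding f_def by blast
  qed
  have order: "fact_le G X g z z' \<longleftrightarrow> set (pps G z) \<subseteq> set (pps G z')" if zI: "z \<in> I" "z' \<in> I" for z z'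
  proof -
    have z: "z \<in> linear_factorizations G X g" "(merge_step G)\<^sup>*\<^sup>* ys z" using memI[OF zI(1)] by auto
    have z': "z' \<in> linear_factorizations G X g" "(merge_step G)\<^sup>*\<^sup>* ys z'" using memI[OF zI(2)] by auto
    have zc': "set z' \<subseteq> carrier G" using LF_props[OF z'(1) XC] by simp
    have dz': "distinct (pps G z')" using LF_props[OF z'(1) XC] by simp
    show ?thesis
    proof
      assume "fact_le G X g z z'"
      then have "(merge_step G)\<^sup>*\<^sup>* z' z" unfolding fact_le_def by simp
      then have "subseq (pps G z) (pps G z')" using merges_inv[OF _ zc'] by blast
      then show "set (pps G z) \<subseteq> set (pps G z')" by (rule subseq_set)
    next
      assume sub: "set (pps G z) \<subseteq> set (pps G z')"
      have fin: "finite (set (pps G z') - set (pps G z))" by simp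
      have sb: "set (pps G z') - set (pps G z) \<subseteq> set (pps G z')" by blast
      obtain w where w: "(merge_step G)\<^sup>*\<^sup>* z' w"
        "set (pps G w) = set (pps G z') - (set (pps G z') - set (pps G z))"
        using remove_cuts[OF fin zc' dz' sb] by blast
      have w2: "set (pps G w) = set (pps G z)" using w(2) sub by auto
      have "(merge_step G)\<^sup>*\<^sup>* ys w" using z'(2) w(1) by simp
      then have "w = z" using reach_unique[OF _ z(2) Y(1) Y(2) Y(3) w2] by simp
      then show "fact_le G X g z z'" unfolding fact_le_def using z z' w(1) by simp
    qed
  qed
  have inj: "inj_on f I"
  proof (rule inj_onI)
    fix z z' assume zI: "z \<in> I" "z' \<in> I" "f z = f z'"
    then have e: "set (pps G z) = set (pps G z')" using key[OF zI(1,2)] key[OF zI(2,1)] by blast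
    have "(merge_step G)\<^sup>*\<^sup>* ys z" "(merge_step G)\<^sup>*\<^sup>* ys z'" using memI[OF zI(1)] memI[OF zI(2)] by simp_all
    then show "z = z'" using reach_unique[OF _ _ Y(1) Y(2) Y(3) e] by simp
  qed
  have img: "f ` I = Pow S"
  proof
    show "f ` I \<subseteq> Pow S" unfolding f_def S_def by auto
  next
    show "Pow S \<subseteq> f ` I"
    proof
      fix U assume "U \<in> Pow S"
      then have US: "U \<subseteq> S" by simp
      define T where "T = (\<lambda>c. Yl ! c) ` (S - U)"
      have T: "finite T" "T \<subseteq> set (pps G ys)" unfolding T_def S_def Yl_def by auto
      obtain w where w: "(merge_step G)\<^sup>*\<^sup>* ys w" "set (pps G w) = set (pps G ys) - T"
        using remove_cuts[OF T(1) Y(1) Y(3) T(2)] by blast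
      have wc: "set w \<subseteq> carrier G" "subseq (pps G w) (pps G ys)" using merges_inv[OF w(1) Y(1)] by auto
      have dw: "distinct (pps G w)" using subseq_distinct[OF wc(2) Y(3)] .
      have "subseq (pps G xs) (pps G ys)" using merges_inv[OF r Y(1)] by simp
      then have "set (pps G xs) \<subseteq> set (pps G ys)" by (rule subseq_set)
      then have PxY: "Px \<subseteq> set Yl" using Px_def Yl_def by simp
      have Pxw: "Px \<subseteq> set (pps G w)"
      proof
        fix p assume p: "p \<in> Px"
        then have "p \<in> set Yl" using PxY by blast
        moreover have "p \<notin> T"
        proof
          assume "p \<in> T"
          then obtain c where "c \<in> S" "p = Yl ! c" unfolding T_def by blast
          then show False using p S_def by simp
        qed
        ultimately show "p \<in> set (pps G w)" using w(2) Yl_def by simp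
      qed
      have fin2: "finite (set (pps G w) - Px)" by simp
      have sb2: "set (pps G w) - Px \<subseteq> set (pps G w)" by blast
      obtain w' where w': "(merge_step G)\<^sup>*\<^sup>* w w'"
        "set (pps G w') = set (pps G w) - (set (pps G w) - Px)"
        using remove_cuts[OF fin2 wc(1) dw sb2] by blast
      have "set (pps G w') = set (pps G xs)" using w'(2) Pxw Px_def by auto
      moreover have "(merge_step G)\<^sup>*\<^sup>* ys w'" using w(1) w'(1) by simp
      ultimately have "w' = xs" using reach_unique[OF _ r Y(1) Y(2) Y(3)] by simp
      then have wx: "(merge_step G)\<^sup>*\<^sup>* w xs" using w'(1) by simp
      have wL: "w \<in> linear_factorizations G X g" using between_valid[OF w(1) wx ysL xsL XC] .
      have wI: "w \<in> I" unfolding I_def fact_le_def using wL xsL ysL w(1) wx by simp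
      have dY: "distinct Yl" using Y(3) Yl_def by simp
      have TT: "(Yl ! c \<in> T) = (c \<in> S - U)" if c: "c < length Yl" for c
      proof
        assume "Yl ! c \<in> T"
        then obtain c' where c': "c' \<in> S - U" "Yl ! c = Yl ! c'" unfolding T_def by blast
        then have "c' < length Yl" unfolding S_def by simp
        then have "c = c'" using c c'(2) dY by (simp add: nth_eq_iff_index_eq)
        then show "c \<in> S - U" using c' by simp
      next
        assume "c \<in> S - U" then show "Yl ! c \<in> T" unfolding T_def by blast
      qed
      have "f w = U"
      proof (rule Set.set_eqI)
        fix c
        show "c \<in> f w \<longleftrightarrow> c \<in> U"
        proof (cases "c < length Yl")
          case True
          have "c \<in> f w \<longleftrightarrow> Yl ! c \<notin> T \<and> Yl ! c \<notin> Px"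
            unfolding f_def using w(2) True Yl_def by auto
          also have "\<dots> \<longleftrightarrow> c \<in> U" using TT[OF True] US True unfolding S_def by auto
          finally show ?thesis .
        next
          case False
          then show ?thesis unfolding f_def using US S_def by auto
        qed
      qed
      then show "U \<in> f ` I" using wI by blast
    qed
  qed
  have "iso_boolean_lattice I (fact_le G X g)"
    unfolding iso_boolean_lattice_def
  proof (intro exI conjI)
    show "finite S" unfolding S_def by simp
    show "bij_betw f I (Pow S)" using inj img by (simp add: bij_betw_def)
    show "\<forall>z\<in>I. \<forall>w\<in>I. fact_le G X g z w \<longleftrightarrow> f z \<subseteq> f w"
    proof (intro ballI)
      fix z w assume "z \<in> I" "w \<in> I"
      then show "fact_le G X g z w \<longleftrightarrow> f z \<subseteq> f w" using order[of z w] key[of z w] by simp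
    qed
  qed
  then show "iso_boolean_lattice {zs. fact_le G X g xs zs \<and> fact_le G X g zs ys} (fact_le G X g)"
    by (simp only: I_def)
qed

end
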